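(* Let $N$ be an $\mathbb{N}^n$-graded submodule of $S^k=Se_1\oplus\cdots\oplus Se_k$ (with $\deg e_i=0$) that is generated in squarefree degrees. Then the initial module $\mathrm{in}(N)$ with respect to the monomial order $\mathbf x^a e_i<\mathbf x^b e_j$ iff ($j<i$) or ($j=i$ and $\mathbf x^a<_{\mathrm{lex}}\mathbf x^b$) is an $\mathbb{N}^n$-graded submodule of $S^k$ of the form $I_1\oplus\cdots\oplus I_k$ (i.e. $I_1e_1\oplus\cdots\oplus I_ke_k$), where each $I_j$ is a monomial ideal of $S$ generated in squarefree degrees.
   Context: $S=\mathbb{k}[x_1,\dots,x_n]$ with fine $\mathbb{N}^n$-grading; $<_{\mathrm{lex}}$ is the usual lexicographic order on monomials of $S$. The initial module $\mathrm{in}(N)$ is the submodule generated by the leading terms (with respect to the given monomial order on $S^k$) of the elements of $N$. A degree is squarefree if all its entries are in $\{0,1\}$. *)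

theory Defs
  imports "HOL-Library.Poly_Mapping"
begin

text \<open>The ring S = k[x_0..x_{n-1}] is the set of
polynomials only involving variables with index < n.\<close>

type_synonym 'k mpoly = "(nat \<Rightarrow>\<^sub>0 nat) \<Rightarrow>\<^sub>0 'k"

text \<open>Elements of S^k are represented as functions from component indices to polynomials,
with components 0..k-1 (standing for e_1..e_k) and zero components beyond.\<close>

type_synonym 'k mvec = "nat \<Rightarrow> 'k mpoly"

definition in_S :: "nat \<Rightarrow> ((nat \<Rightarrow>\<^sub>0 nat) \<Rightarrow>\<^sub>0 'k::zero) \<Rightarrow> bool" where
  "in_S n p \<longleftrightarrow> (\<forall>a \<in> Poly_Mapping.keys p. Poly_Mapping.keys a \<subseteq> {..<n})"

definition in_Fk :: "nat \<Rightarrow> nat \<Rightarrow> 'k::zero mvec \<Rightarrow> bool" where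
  "in_Fk n k v \<longleftrightarrow> (\<forall>j. (j < k \<longrightarrow> in_S n (v j)) \<and> (k \<le> j \<longrightarrow> v j = 0))"

definition is_submodule :: "nat \<Rightarrow> nat \<Rightarrow> 'k::comm_ring_1 mvec set \<Rightarrow> bool" where
  "is_submodule n k N \<longleftrightarrow>
     (\<forall>v\<in>N. in_Fk n k v) \<and> (\<lambda>j. 0) \<in> N \<and>
     (\<forall>v\<in>N. \<forall>w\<in>N. (\<lambda>j. v j + w j) \<in> N) \<and>
     (\<forall>p. \<forall>v\<in>N. in_S n p \<longrightarrow> (\<lambda>j. p * v j) \<in> N)"

definition gen_submodule :: "nat \<Rightarrow> nat \<Rightarrow> 'k::comm_ring_1 mvec set \<Rightarrow> 'k mvec set" where
  "gen_submodule n k G = \<Inter>{N. is_submodule n k N \<and> G \<subseteq> N}"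

definition is_ideal :: "nat \<Rightarrow> 'k::comm_ring_1 mpoly set \<Rightarrow> bool" where
  "is_ideal n I \<longleftrightarrow>
     (\<forall>p\<in>I. in_S n p) \<and> 0 \<in> I \<and> (\<forall>p\<in>I. \<forall>q\<in>I. p + q \<in> I) \<and>
     (\<forall>r. \<forall>p\<in>I. in_S n r \<longrightarrow> r * p \<in> I)"

definition gen_ideal :: "nat \<Rightarrow> 'k::comm_ring_1 mpoly set \<Rightarrow> 'k mpoly set" where
  "gen_ideal n G = \<Inter>{I. is_ideal n I \<and> G \<subseteq> I}"

definition sqfree_deg :: "(nat \<Rightarrow>\<^sub>0 nat) \<Rightarrow> bool" where
  "sqfree_deg d \<longleftrightarrow> (\<forall>i. Poly_Mapping.lookup d i \<le> 1)"

definition hcomp :: "(nat \<Rightarrow>\<^sub>0 nat) \<Rightarrow> 'k::zero mvec \<Rightarrow> 'k mvec" where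
  "hcomp d v = (\<lambda>j. Poly_Mapping.single d (Poly_Mapping.lookup (v j) d))"

definition is_graded :: "'k::zero mvec set \<Rightarrow> bool" where
  "is_graded N \<longleftrightarrow> (\<forall>v\<in>N. \<forall>d. hcomp d v \<in> N)"

definition gen_in_sqfree_degrees :: "nat \<Rightarrow> nat \<Rightarrow> 'k::comm_ring_1 mvec set \<Rightarrow> bool" where
  "gen_in_sqfree_degrees n k N \<longleftrightarrow>
     (\<exists>G. (\<forall>g\<in>G. in_Fk n k g \<and> (\<exists>d. sqfree_deg d \<and> hcomp d g = g)) \<and>
          N = gen_submodule n k G)"

text \<open>Lex order on monomials: x_0 > x_1 > ... ; x^a <lex x^b iff at the first index
where a and b differ, a is smaller.\<close>
definition lex_less :: "(nat \<Rightarrow>\<^sub>0 nat) \<Rightarrow> (nat \<Rightarrow>\<^sub>0 nat) \<Rightarrow> bool" where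
  "lex_less a b \<longleftrightarrow> (\<exists>l. (\<forall>m<l. Poly_Mapping.lookup a m = Poly_Mapping.lookup b m) \<and> Poly_Mapping.lookup a l < Poly_Mapping.lookup b l)"

definition term_less :: "(nat \<Rightarrow>\<^sub>0 nat) \<times> nat \<Rightarrow> (nat \<Rightarrow>\<^sub>0 nat) \<times> nat \<Rightarrow> bool" where
  "term_less s t \<longleftrightarrow> (case s of (a, i) \<Rightarrow> case t of (b, j) \<Rightarrow>
      j < i \<or> (j = i \<and> lex_less a b))"

definition vterms :: "'k::zero mvec \<Rightarrow> ((nat \<Rightarrow>\<^sub>0 nat) \<times> nat) set" where
  "vterms v = {(a, i). a \<in> Poly_Mapping.keys (v i)}"

definition lead_term :: "'k::zero mvec \<Rightarrow> (nat \<Rightarrow>\<^sub>0 nat) \<times> nat" where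
  "lead_term v = (THE t. t \<in> vterms v \<and> (\<forall>s\<in>vterms v. s \<noteq> t \<longrightarrow> term_less s t))"

definition term_vec :: "(nat \<Rightarrow>\<^sub>0 nat) \<times> nat \<Rightarrow> 'k::{zero,one} mvec" where
  "term_vec t = (\<lambda>j. if j = snd t then Poly_Mapping.single (fst t) 1 else 0)"

definition initial_module :: "nat \<Rightarrow> nat \<Rightarrow> 'k::comm_ring_1 mvec set \<Rightarrow> 'k mvec set" where
  "initial_module n k N =
     gen_submodule n k {term_vec (lead_term v) | v. v \<in> N \<and> v \<noteq> (\<lambda>j. 0)}"

definition sqfree_monomial_ideal :: "nat \<Rightarrow> 'k::comm_ring_1 mpoly set \<Rightarrow> bool" where
  "sqfree_monomial_ideal n I \<longleftrightarrow>
     (\<exists>M. (\<forall>m\<in>M. Poly_Mapping.keys m \<subseteq> {..<n} \<and> sqfree_deg m) \<and>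
          I = gen_ideal n ((\<lambda>m. Poly_Mapping.single m 1) ` M))"

end

theory Submission
  imports Defs
begin

abbreviation lk where "lk \<equiv> Poly_Mapping.lookup"
abbreviation ks where "ks \<equiv> Poly_Mapping.keys"
abbreviation sg where "sg \<equiv> Poly_Mapping.single"
lemma lk_single_mult: "lk (sg b (c::'k::comm_ring_1) * q) (b + d) = c * lk q (d::nat\<Rightarrow>\<^sub>0nat)"
  by (simp add: lookup_mult lookup_single when_mult mult_when Sum_any_right_distrib[symmetric])
lemma lk_single_mult0: "\<not>(\<exists>d'. d = b + d') \<Longrightarrow> lk (sg b (c::'k::comm_ring_1) * q) (d::nat\<Rightarrow>\<^sub>0nat) = 0"
  using keys_mult[of "sg b c" q] by (auto simp: in_keys_iff split: if_splits)
lemma poly_sum: "p = (\<Sum>a\<in>ks p. sg a (lk p a))"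
  by (rule poly_mapping_eqI) (simp add: lookup_sum lookup_single when_def in_keys_iff)


lemma lex_irrefl: "\<not> lex_less a a" by (auto simp: lex_less_def)

lemma lex_trans: assumes "lex_less a b" "lex_less b c" shows "lex_less a c"
proof -
  obtain l1 where l1: "\<And>m. m<l1 \<Longrightarrow> lk a m = lk b m" "lk a l1 < lk b l1" using assms(1) by (auto simp: lex_less_def)
  obtain l2 where l2: "\<And>m. m<l2 \<Longrightarrow> lk b m = lk c m" "lk b l2 < lk c l2" using assms(2) by (auto simp: lex_less_def)
  define l where "l = min l1 l2"
  have 1: "lk a m = lk c m" if "m < l" for m
  proof -
    have "m < l1" "m < l2" using that by (simp_all add: l_def)
    then show ?thesis using l1(1) l2(1) by simp
  qed
  have 2: "lk a l < lk c l"
  proof (cases "l1 < l2")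
    case True
    then have "l = l1" by (simp add: l_def)
    then show ?thesis using l1(2) l2(1)[OF True] by simp
  next
    case False
    then have "l = l2" by (simp add: l_def)
    show ?thesis
    proof (cases "l1 = l2")
      case True then show ?thesis using l1(2) l2(2) \<open>l = l2\<close> by simp
    next
      case False
      then have "l2 < l1" using \<open>\<not> l1 < l2\<close> by simp
      then show ?thesis using l1(1)[OF \<open>l2 < l1\<close>] l2(2) \<open>l = l2\<close> by simp
    qed
  qed
  show ?thesis unfolding lex_less_def using 1 2 by blast
qed

lemma lex_asym: "lex_less a b \<Longrightarrow> \<not> lex_less b a"
  using lex_irrefl[of a] lex_trans[of a b a] by blast

lemma lex_total: assumes "a \<noteq> b" shows "lex_less a b \<or> lex_less b a"
proof -
  have "\<exists>i. lk a i \<noteq> lk b i"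
  proof (rule ccontr)
    assume "\<not> (\<exists>i. lk a i \<noteq> lk b i)"
    then have "a = b" by (intro poly_mapping_eqI) simp
    then show False using assms by simp
  qed
  define l where "l = (LEAST i. lk a i \<noteq> lk b i)"
  have 1: "lk a l \<noteq> lk b l" unfolding l_def by (rule LeastI_ex) fact
  have 2: "\<forall>m<l. lk a m = lk b m" unfolding l_def using not_less_Least by blast
  show ?thesis
  proof (cases "lk a l < lk b l")
    case True then have "lex_less a b" unfolding lex_less_def using 2 by blast
    then show ?thesis by blast
  next
    case False then have "lk b l < lk a l" using 1 by simp
    then have "lex_less b a" unfolding lex_less_def using 2 by (metis)
    then show ?thesis by blast
  qed
qed

lemma term_irrefl: "\<not> term_less t t"
  by (cases t) (auto simp: term_less_def lex_irrefl)

lemma term_trans: "term_less s t \<Longrightarrow> term_less t u \<Longrightarrow> term_less s u"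
proof -
  obtain a i where s: "s = (a,i)" by (cases s)
  obtain b j where t: "t = (b,j)" by (cases t)
  obtain c l where u: "u = (c,l)" by (cases u)
  assume "term_less s t" "term_less t u"
  then have "j < i \<or> (j = i \<and> lex_less a b)" "l < j \<or> (l = j \<and> lex_less b c)"
    by (simp_all add: s t u term_less_def)
  then have "l < i \<or> (l = i \<and> lex_less a c)"
    by (metis lex_trans less_trans)
  then show ?thesis by (simp add: s u term_less_def)
qed

lemma term_total: "s \<noteq> t \<Longrightarrow> term_less s t \<or> term_less t s"
proof -
  obtain a i where s: "s = (a,i)" by (cases s)
  obtain b j where t: "t = (b,j)" by (cases t)
  assume "s \<noteq> t"
  then have "i \<noteq> j \<or> a \<noteq> b" using s t by auto
  then have "(j < i \<or> (j = i \<and> lex_less a b)) \<or> (i < j \<or> (i = j \<and> lex_less b a))"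
    using lex_total by auto
  then show ?thesis by (simp add: s t term_less_def)
qed

lemma finite_max_ex:
  assumes "finite A" "A \<noteq> {}"
    and tr: "\<And>x y z. R x y \<Longrightarrow> R y z \<Longrightarrow> R x z"
    and tot: "\<And>x y. x \<noteq> y \<Longrightarrow> R x y \<or> R y x"
  shows "\<exists>t\<in>A. \<forall>s\<in>A. s \<noteq> t \<longrightarrow> R s t"
  using assms(1,2)
proof (induction A rule: finite_ne_induct)
  case (singleton x) then show ?case by auto
next
  case (insert x F)
  then obtain t where t: "t \<in> F" "\<forall>s\<in>F. s \<noteq> t \<longrightarrow> R s t" by auto
  have "x \<noteq> t" using t insert by auto
  then consider "R t x" | "R x t" using tot by blast
  then show ?case
  proof cases
    case 1
    have "\<forall>s\<in>insert x F. s \<noteq> x \<longrightarrow> R s x"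
    proof (intro ballI impI)
      fix s assume "s \<in> insert x F" "s \<noteq> x"
      then have "s \<in> F" by simp
      show "R s x"
      proof (cases "s = t")
        case True then show ?thesis using 1 by simp
      next
        case False then have "R s t" using t \<open>s \<in> F\<close> by blast
        then show ?thesis using tr 1 by blast
      qed
    qed
    then show ?thesis by blast
  next
    case 2 then show ?thesis using t by (intro bexI[of _ t]) auto
  qed
qed

lemma lead_term_unique:
  assumes "t \<in> vterms v" "\<forall>s\<in>vterms v. s \<noteq> t \<longrightarrow> term_less s t"
  shows "lead_term v = t"
  unfolding lead_term_def
proof (rule the_equality)
  show "t \<in> vterms v \<and> (\<forall>s\<in>vterms v. s \<noteq> t \<longrightarrow> term_less s t)" using assms by blast
next
  fix u assume u: "u \<in> vterms v \<and> (\<forall>s\<in>vterms v. s \<noteq> u \<longrightarrow> term_less s u)"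
  show "u = t"
  proof (rule ccontr)
    assume "u \<noteq> t"
    then have "term_less u t" "term_less t u" using u assms by auto
    then show False using term_irrefl[of u] term_trans[of u t u] by auto
  qed
qed

lemma vterms_finite: "in_Fk n k v \<Longrightarrow> finite (vterms v)"
proof -
  assume a: "in_Fk n k v"
  have "vterms v \<subseteq> (\<Union>j\<in>{..<k}. (\<lambda>a. (a, j)) ` ks (v j))"
  proof
    fix t assume "t \<in> vterms v"
    then obtain a j where t: "t = (a,j)" "a \<in> ks (v j)" by (auto simp: vterms_def)
    then have "v j \<noteq> 0" by auto
    then have "j < k" using a by (auto simp: in_Fk_def)
    then show "t \<in> (\<Union>j\<in>{..<k}. (\<lambda>a. (a, j)) ` ks (v j))" using t by auto
  qed
  then show ?thesis by (rule finite_subset) auto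
qed

lemma vterms_nonempty: "v \<noteq> (\<lambda>j. 0) \<Longrightarrow> vterms v \<noteq> {}"
proof -
  assume "v \<noteq> (\<lambda>j. 0)"
  then obtain j where "v j \<noteq> 0" by auto
  then obtain a where "a \<in> ks (v j)" by (metis keys_eq_empty ex_in_conv)
  then show ?thesis by (auto simp: vterms_def)
qed

lemma lead_term_prop:
  assumes "in_Fk n k v" "v \<noteq> (\<lambda>j. 0)"
  shows "lead_term v \<in> vterms v \<and> (\<forall>s\<in>vterms v. s \<noteq> lead_term v \<longrightarrow> term_less s (lead_term v))"
proof -
  have "\<exists>t\<in>vterms v. \<forall>s\<in>vterms v. s \<noteq> t \<longrightarrow> term_less s t"
    by (rule finite_max_ex[OF vterms_finite[OF assms(1)] vterms_nonempty[OF assms(2)]])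
      (erule (1) term_trans, erule term_total)
  then obtain t where "t \<in> vterms v" "\<forall>s\<in>vterms v. s \<noteq> t \<longrightarrow> term_less s t" by blast
  then show ?thesis using lead_term_unique[of t v] by simp
qed



lemma in_S_add: "in_S n p \<Longrightarrow> in_S n q \<Longrightarrow> in_S n (p + q)"
  using keys_add[of p q] by (auto simp: in_S_def)

lemma keys_nat_add: "ks ((a::nat\<Rightarrow>\<^sub>0nat) + b) = ks a \<union> ks b"
  by (auto simp: in_keys_iff lookup_add)

lemma in_S_mult: assumes "in_S n p" "in_S n q" shows "in_S n (p * q)"
  unfolding in_S_def
proof
  fix a assume "a \<in> ks (p * q)"
  then obtain a1 b1 where "a = a1 + b1" "a1 \<in> ks p" "b1 \<in> ks q" using keys_mult[of p q] by blast
  then show "ks a \<subseteq> {..<n}" using assms by (auto simp: in_S_def keys_nat_add)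
qed

lemma in_S_single: "ks a \<subseteq> {..<n} \<Longrightarrow> in_S n (sg a c)"
  by (auto simp: in_S_def)

lemma in_S_zero: "in_S n 0" by (simp add: in_S_def)

lemma Fk_submodule: "is_submodule n k {v. in_Fk n k (v::'k::comm_ring_1 mvec)}"
  by (auto simp: is_submodule_def in_Fk_def in_S_zero intro: in_S_add in_S_mult)

lemma gen_submodule_least: "is_submodule n k Q \<Longrightarrow> G \<subseteq> Q \<Longrightarrow> gen_submodule n k G \<subseteq> Q"
  unfolding gen_submodule_def by blast

lemma gen_submodule_sub: "G \<subseteq> gen_submodule n k G"
  unfolding gen_submodule_def by blast

lemma gen_submodule_mem: "v \<in> gen_submodule n k G \<longleftrightarrow> (\<forall>N. is_submodule n k N \<and> G \<subseteq> N \<longrightarrow> v \<in> N)"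
  unfolding gen_submodule_def by blast

lemma gen_submodule_is: assumes "G \<subseteq> {v. in_Fk n k v}"
  shows "is_submodule n k (gen_submodule n k (G::'k::comm_ring_1 mvec set))"
  unfolding is_submodule_def[of n k "gen_submodule n k G"]
proof (intro conjI ballI allI impI)
  fix v assume "v \<in> gen_submodule n k G" then show "in_Fk n k v"
    using assms Fk_submodule unfolding gen_submodule_mem by blast
next
  show "(\<lambda>j. 0) \<in> gen_submodule n k G" unfolding gen_submodule_mem by (simp add: is_submodule_def)
next
  fix v w assume "v \<in> gen_submodule n k G" "w \<in> gen_submodule n k G"
  then show "(\<lambda>j. v j + w j) \<in> gen_submodule n k G" unfolding gen_submodule_mem by (simp add: is_submodule_def)
next
  fix p :: "'k mpoly" and v assume "v \<in> gen_submodule n k G" "in_S n p"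
  then show "(\<lambda>j. p * v j) \<in> gen_submodule n k G" unfolding gen_submodule_mem by (simp add: is_submodule_def)
qed

lemma gen_ideal_least: "is_ideal n I \<Longrightarrow> G \<subseteq> I \<Longrightarrow> gen_ideal n G \<subseteq> I"
  unfolding gen_ideal_def by blast

lemma gen_ideal_sub: "G \<subseteq> gen_ideal n G"
  unfolding gen_ideal_def by blast

lemma gen_ideal_mem: "v \<in> gen_ideal n G \<longleftrightarrow> (\<forall>I. is_ideal n I \<and> G \<subseteq> I \<longrightarrow> v \<in> I)"
  unfolding gen_ideal_def by blast

lemma gen_ideal_is: assumes "G \<subseteq> {p. in_S n p}"
  shows "is_ideal n (gen_ideal n (G::'k::comm_ring_1 mpoly set))"
  unfolding is_ideal_def[of n "gen_ideal n G"]
proof (intro conjI ballI allI impI)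
  have "is_ideal n {p. in_S n p}" by (auto simp: is_ideal_def in_S_zero intro: in_S_add in_S_mult)
  moreover fix v assume "v \<in> gen_ideal n G"
  ultimately show "in_S n v" using assms unfolding gen_ideal_mem by blast
next
  show "0 \<in> gen_ideal n G" unfolding gen_ideal_mem by (simp add: is_ideal_def)
next
  fix v w assume "v \<in> gen_ideal n G" "w \<in> gen_ideal n G"
  then show "v + w \<in> gen_ideal n G" unfolding gen_ideal_mem by (simp add: is_ideal_def)
next
  fix p :: "'k mpoly" and v assume "v \<in> gen_ideal n G" "in_S n p"
  then show "p * v \<in> gen_ideal n G" unfolding gen_ideal_mem by (simp add: is_ideal_def)
qed

lemma sum_closed_vec:
  assumes Q0: "(\<lambda>j. 0) \<in> Q" and Qadd: "\<forall>v\<in>Q. \<forall>w\<in>Q. (\<lambda>j. v j + w j) \<in> Q"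
    and fin: "finite A" and each: "\<And>a. a \<in> A \<Longrightarrow> (\<lambda>j. f a j) \<in> Q"
  shows "(\<lambda>j. \<Sum>a\<in>A. f a j) \<in> Q"
  using fin each
proof (induction A rule: finite_induct)
  case empty then show ?case using Q0 by simp
next
  case (insert x F)
  then have "(\<lambda>j. f x j + (\<Sum>a\<in>F. f a j)) \<in> Q" using Qadd by auto
  then show ?case using insert by simp
qed

lemma mono_closure:
  fixes Q :: "'k::comm_ring_1 mvec set"
  assumes QF: "\<forall>v\<in>Q. in_Fk n k v" and Q0: "(\<lambda>j. 0) \<in> Q"
    and Qadd: "\<forall>v\<in>Q. \<forall>w\<in>Q. (\<lambda>j. v j + w j) \<in> Q"
    and Qmon: "\<And>b c v. ks b \<subseteq> {..<n} \<Longrightarrow> v \<in> Q \<Longrightarrow> (\<lambda>j. sg b c * v j) \<in> Q"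
  shows "is_submodule n k Q"
  unfolding is_submodule_def
proof (intro conjI QF Q0 Qadd allI ballI impI)
  fix p :: "'k mpoly" and v assume p: "in_S n p" and v: "v \<in> Q"
  have "(\<lambda>j. \<Sum>a\<in>ks p. sg a (lk p a) * v j) \<in> Q"
    by (rule sum_closed_vec[OF Q0 Qadd]) (use p v Qmon in \<open>auto simp: in_S_def\<close>)
  moreover have "(\<lambda>j. \<Sum>a\<in>ks p. sg a (lk p a) * v j) = (\<lambda>j. p * v j)"
    by (subst (2) poly_sum[of p]) (simp add: sum_distrib_right)
  ultimately show "(\<lambda>j. p * v j) \<in> Q" by simp
qed



lemma sg_add1: "sg (a + b) (1::'k::comm_ring_1) = sg a 1 * sg b 1"
  by (simp add: mult_single)

lemma hcomp_add: "hcomp d (\<lambda>j. v j + w j) = (\<lambda>j. hcomp d v j + hcomp d w j)"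
  by (simp add: hcomp_def lookup_add single_add)

lemma hcomp_zero: "hcomp d (\<lambda>j. 0) = (\<lambda>j. 0)"
  by (simp add: hcomp_def)

lemma hcomp_mono: "hcomp (b + d') (\<lambda>j. sg b (c::'k::comm_ring_1) * v j) = (\<lambda>j. sg b c * hcomp d' v j)"
  by (simp add: hcomp_def lk_single_mult mult_single)

lemma hcomp_mono0: "\<not>(\<exists>d'. d = b + d') \<Longrightarrow> hcomp d (\<lambda>j. sg b (c::'k::comm_ring_1) * v j) = (\<lambda>j. 0)"
  by (simp add: hcomp_def lk_single_mult0)

lemma sqfree_zero: "sqfree_deg 0" by (simp add: sqfree_deg_def)

lemma Fk_add: "in_Fk n k v \<Longrightarrow> in_Fk n k w \<Longrightarrow> in_Fk n k (\<lambda>j. v j + w j)"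
  by (auto simp: in_Fk_def intro: in_S_add)

lemma Fk_mult: "in_S n p \<Longrightarrow> in_Fk n k v \<Longrightarrow> in_Fk n k (\<lambda>j. p * v j)"
  by (auto simp: in_Fk_def intro: in_S_mult)

lemma Fk_keys: "in_Fk n k v \<Longrightarrow> d \<in> ks (v j) \<Longrightarrow> ks d \<subseteq> {..<n} \<and> j < k"
  unfolding in_Fk_def in_S_def by (metis keys_zero empty_iff not_le)

definition Pset :: "nat \<Rightarrow> nat \<Rightarrow> 'k::comm_ring_1 mvec set \<Rightarrow> 'k mvec set" where
  "Pset n k N = {v. in_Fk n k v \<and> (\<forall>d. \<exists>s e w. d = s + e \<and> sqfree_deg s \<and> w \<in> N \<and> hcomp d v = (\<lambda>j. sg e 1 * w j))}"

lemma triv_wit: "(\<lambda>j. 0) \<in> N \<Longrightarrow> hcomp d v = (\<lambda>j. 0) \<Longrightarrow>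
   \<exists>s e w. d = s + e \<and> sqfree_deg s \<and> w \<in> N \<and> hcomp d v = (\<lambda>j. sg e (1::'k::comm_ring_1) * w j)"
  by (intro exI[of _ 0] exI[of _ d] exI[of _ "\<lambda>j. 0"]) (simp add: sqfree_zero)

lemma Pset_add:
  fixes N :: "'k::comm_ring_1 mvec set"
  assumes sub: "is_submodule n k N" and v1: "v1 \<in> Pset n k N" and v2: "v2 \<in> Pset n k N"
  shows "(\<lambda>j. v1 j + v2 j) \<in> Pset n k N"
proof -
  have N0: "(\<lambda>j. 0) \<in> N" using sub by (simp add: is_submodule_def)
  have Fk: "in_Fk n k (\<lambda>j. v1 j + v2 j)" using v1 v2 Fk_add by (auto simp: Pset_def)
  have "\<exists>s e w. d = s + e \<and> sqfree_deg s \<and> w \<in> N \<and> hcomp d (\<lambda>j. v1 j + v2 j) = (\<lambda>j. sg e 1 * w j)" for d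
  proof (cases "hcomp d (\<lambda>j. v1 j + v2 j) = (\<lambda>j. 0)")
    case True then show ?thesis using triv_wit[OF N0] by blast
  next
    case False
    then obtain j where "hcomp d (\<lambda>j. v1 j + v2 j) j \<noteq> 0" by auto
    then have "d \<in> ks (v1 j + v2 j)" by (auto simp: hcomp_def in_keys_iff)
    then have dn: "ks d \<subseteq> {..<n}" using Fk_keys[OF Fk] by auto
    obtain s1 e1 w1 where 1: "d = s1 + e1" "sqfree_deg s1" "w1 \<in> N" "hcomp d v1 = (\<lambda>j. sg e1 1 * w1 j)"
      using v1 unfolding Pset_def mem_Collect_eq by blast
    obtain s2 e2 w2 where 2: "d = s2 + e2" "sqfree_deg s2" "w2 \<in> N" "hcomp d v2 = (\<lambda>j. sg e2 1 * w2 j)"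
      using v2 unfolding Pset_def mem_Collect_eq by blast
    define s where "s = s1 + (s2 - s1)"
    define e where "e = d - s"
    define f1 where "f1 = s - s1"
    define f2 where "f2 = s - s2"
    have h1: "lk d i = lk s1 i + lk e1 i" "lk d i = lk s2 i + lk e2 i" for i
      by (simp only: 1(1) lookup_add, simp only: 2(1) lookup_add)
    have ls: "lk s i = lk s1 i + (lk s2 i - lk s1 i)" for i by (simp add: s_def lookup_add lookup_minus)
    have ds: "d = s + e"
    proof (rule poly_mapping_eqI)
      fix i have "lk (s + e) i = lk s i + (lk d i - lk s i)" by (simp add: e_def lookup_add lookup_minus)
      then show "lk d i = lk (s + e) i" using h1[of i] h1(2)[of i] ls[of i] by arith
    qed
    have e1: "e1 = e + f1"
    proof (rule poly_mapping_eqI)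
      fix i have "lk (e + f1) i = (lk d i - lk s i) + (lk s i - lk s1 i)" by (simp add: e_def f1_def lookup_add lookup_minus)
      then show "lk e1 i = lk (e + f1) i" using h1[of i] h1(2)[of i] ls[of i] by arith
    qed
    have e2: "e2 = e + f2"
    proof (rule poly_mapping_eqI)
      fix i have "lk (e + f2) i = (lk d i - lk s i) + (lk s i - lk s2 i)" by (simp add: e_def f2_def lookup_add lookup_minus)
      then show "lk e2 i = lk (e + f2) i" using h1[of i] h1(2)[of i] ls[of i] by arith
    qed
    have sq: "sqfree_deg s" unfolding sqfree_deg_def
    proof
      fix i have "lk s1 i \<le> 1" "lk s2 i \<le> 1" using 1(2) 2(2) by (auto simp: sqfree_deg_def)
      then show "lk s i \<le> 1" using ls[of i] by arith
    qed
    have kf1: "ks f1 \<subseteq> {..<n}"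
    proof
      fix x assume "x \<in> ks f1"
      then have nz: "lk f1 x \<noteq> 0" by (simp add: in_keys_iff)
      have "lk f1 x = lk s x - lk s1 x" by (simp add: f1_def lookup_minus)
      then have "lk d x \<noteq> 0" using nz h1[of x] h1(2)[of x] ls[of x] by arith
      then have "x \<in> ks d" by (simp add: in_keys_iff)
      then show "x \<in> {..<n}" using dn by blast
    qed
    have kf2: "ks f2 \<subseteq> {..<n}"
    proof
      fix x assume "x \<in> ks f2"
      then have nz: "lk f2 x \<noteq> 0" by (simp add: in_keys_iff)
      have "lk f2 x = lk s x - lk s2 x" by (simp add: f2_def lookup_minus)
      then have "lk d x \<noteq> 0" using nz h1[of x] h1(2)[of x] ls[of x] by arith
      then have "x \<in> ks d" by (simp add: in_keys_iff)
      then show "x \<in> {..<n}" using dn by blast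
    qed
    define w where "w = (\<lambda>j. sg f1 1 * w1 j + sg f2 1 * w2 j)"
    have subA: "\<forall>v\<in>N. \<forall>w\<in>N. (\<lambda>j. v j + w j) \<in> N" and subM: "\<forall>p. \<forall>v\<in>N. in_S n p \<longrightarrow> (\<lambda>j. p * v j) \<in> N"
      using sub by (simp_all add: is_submodule_def)
    have a1: "(\<lambda>j. sg f1 1 * w1 j) \<in> N" using subM in_S_single[OF kf1] 1(3) by blast
    have a2: "(\<lambda>j. sg f2 1 * w2 j) \<in> N" using subM in_S_single[OF kf2] 2(3) by blast
    have wN: "w \<in> N" unfolding w_def using subA[rule_format, OF a1 a2] by simp
    have "hcomp d (\<lambda>j. v1 j + v2 j) = (\<lambda>j. sg e 1 * w j)"
      unfolding hcomp_add 1(4) 2(4) w_def e1 e2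
      by (simp add: sg_add1 distrib_left mult.assoc)
    then show ?thesis using ds sq wN by blast
  qed
  then show ?thesis using Fk by (simp add: Pset_def)
qed



lemma Pset_mon:
  fixes N :: "'k::comm_ring_1 mvec set"
  assumes sub: "is_submodule n k N" and b: "ks b \<subseteq> {..<n}" and v: "v \<in> Pset n k N"
  shows "(\<lambda>j. sg b c * v j) \<in> Pset n k N"
proof -
  have N0: "(\<lambda>j. 0) \<in> N" using sub by (simp add: is_submodule_def)
  have Fk: "in_Fk n k (\<lambda>j. sg b c * v j)" using v Fk_mult[OF in_S_single[OF b]] by (auto simp: Pset_def)
  have "\<exists>s e w. d = s + e \<and> sqfree_deg s \<and> w \<in> N \<and> hcomp d (\<lambda>j. sg b c * v j) = (\<lambda>j. sg e 1 * w j)" for d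
  proof (cases "\<exists>d'. d = b + d'")
    case False then show ?thesis using triv_wit[OF N0] hcomp_mono0 by metis
  next
    case True
    then obtain d' where d: "d = b + d'" by blast
    obtain s e w where 1: "d' = s + e" "sqfree_deg s" "w \<in> N" "hcomp d' v = (\<lambda>j. sg e 1 * w j)"
      using v unfolding Pset_def mem_Collect_eq by blast
    have wN: "(\<lambda>j. sg 0 c * w j) \<in> N" using sub 1(3) in_S_single[of 0 n c] by (simp add: is_submodule_def)
    have "hcomp d (\<lambda>j. sg b c * v j) = (\<lambda>j. sg (b + e) 1 * (sg 0 c * w j))"
      unfolding d hcomp_mono 1(4) by (simp add: mult.assoc[symmetric] mult_single add.commute)
    moreover have "d = s + (b + e)" using d 1(1) by (simp add: ac_simps)
    ultimately show ?thesis using 1(2) wN by blast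
  qed
  then show ?thesis using Fk by (simp add: Pset_def)
qed

lemma N_sub_Pset:
  fixes N :: "'k::comm_ring_1 mvec set"
  assumes sub: "is_submodule n k N" and gen: "gen_in_sqfree_degrees n k N"
  shows "N \<subseteq> Pset n k N"
proof -
  obtain G where G: "\<forall>g\<in>G. in_Fk n k g \<and> (\<exists>d. sqfree_deg d \<and> hcomp d g = g)" and NG: "N = gen_submodule n k G"
    using gen unfolding gen_in_sqfree_degrees_def by blast
  have N0: "(\<lambda>j. 0) \<in> N" using sub by (simp add: is_submodule_def)
  have GN: "G \<subseteq> N" using NG gen_submodule_sub by blast
  have "is_submodule n k (Pset n k N)"
  proof (rule mono_closure)
    show "\<forall>v\<in>Pset n k N. in_Fk n k v" by (simp add: Pset_def)
    have "\<exists>s e w. d = s + e \<and> sqfree_deg s \<and> w \<in> N \<and> hcomp d (\<lambda>j. 0) = (\<lambda>j. sg e (1::'k) * w j)" for d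
      using triv_wit[OF N0 hcomp_zero] by blast
    then show "(\<lambda>j. 0) \<in> Pset n k N" unfolding Pset_def
      by (auto simp: in_Fk_def in_S_zero)
    show "\<forall>v\<in>Pset n k N. \<forall>w\<in>Pset n k N. (\<lambda>j. v j + w j) \<in> Pset n k N" using Pset_add[OF sub] by blast
    show "\<And>b c v. ks b \<subseteq> {..<n} \<Longrightarrow> v \<in> Pset n k N \<Longrightarrow> (\<lambda>j. sg b c * v j) \<in> Pset n k N"
      using Pset_mon[OF sub] by blast
  qed
  moreover have "G \<subseteq> Pset n k N"
  proof
    fix g assume g: "g \<in> G"
    then obtain dg where dg: "sqfree_deg dg" "hcomp dg g = g" and Fk: "in_Fk n k g" using G by blast
    have "\<exists>s e w. d = s + e \<and> sqfree_deg s \<and> w \<in> N \<and> hcomp d g = (\<lambda>j. sg e 1 * w j)" for d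
    proof (cases "d = dg")
      case True then show ?thesis using dg g GN by (intro exI[of _ d] exI[of _ 0] exI[of _ g]) auto
    next
      case False
      have "hcomp d g = (\<lambda>j. 0)"
      proof
        fix j
        have "lk (g j) d = lk (hcomp dg g j) d" using dg by simp
        also have "\<dots> = 0" using False by (simp add: hcomp_def lookup_single)
        finally show "hcomp d g j = 0" by (simp add: hcomp_def)
      qed
      then show ?thesis using triv_wit[OF N0] by blast
    qed
    then show "g \<in> Pset n k N" using Fk by (simp add: Pset_def)
  qed
  ultimately show ?thesis using NG gen_submodule_least by blast
qed



lemma core:
  fixes N :: "'k::comm_ring_1 mvec set"
  assumes sub: "is_submodule n k N" and gr: "is_graded N" and NP: "N \<subseteq> Pset n k N"
    and v: "v \<in> N" "v \<noteq> (\<lambda>j. 0)" and lt: "lead_term v = (a, j)"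
  shows "\<exists>s e. a = s + e \<and> sqfree_deg s \<and> (\<exists>w\<in>N. w \<noteq> (\<lambda>j. 0) \<and> lead_term w = (s, j))"
proof -
  have Fkv: "in_Fk n k v" using sub v by (simp add: is_submodule_def)
  have LT: "(a,j) \<in> vterms v" "\<forall>t\<in>vterms v. t \<noteq> (a,j) \<longrightarrow> term_less t (a,j)"
    using lead_term_prop[OF Fkv v(2)] lt by auto
  obtain s e w where 1: "a = s + e" "sqfree_deg s" "w \<in> N" "hcomp a v = (\<lambda>i. sg e 1 * w i)"
    using NP v(1) unfolding Pset_def mem_Collect_eq subset_iff by blast
  define w' where "w' = hcomp s w"
  have w'N: "w' \<in> N" using gr 1(3) by (simp add: is_graded_def w'_def)
  have coef: "lk (v i) a = lk (w i) s" for i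
  proof -
    have "lk (hcomp a v i) a = lk (sg e 1 * w i) (e + s)" using 1(1,4) by (simp add: add.commute)
    then show ?thesis by (simp add: hcomp_def lk_single_mult)
  qed
  have w'eq: "w' i = sg s (lk (v i) a)" for i by (simp add: w'_def hcomp_def coef)
  have vt: "(b, i) \<in> vterms w' \<longleftrightarrow> b = s \<and> lk (v i) a \<noteq> 0" for b i
    by (auto simp: vterms_def w'eq)
  have sj: "(s, j) \<in> vterms w'" using LT(1) vt by (auto simp: vterms_def in_keys_iff)
  have nz: "w' \<noteq> (\<lambda>j. 0)" using sj by (auto simp: vterms_def)
  have others: "\<forall>t\<in>vterms w'. t \<noteq> (s,j) \<longrightarrow> term_less t (s,j)"
  proof (intro ballI impI)
    fix t assume t: "t \<in> vterms w'" "t \<noteq> (s,j)"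
    obtain b i where bi: "t = (b,i)" by (cases t)
    have "b = s" "lk (v i) a \<noteq> 0" using t bi vt by auto
    then have "i \<noteq> j" "(a,i) \<in> vterms v" using t bi by (auto simp: vterms_def in_keys_iff)
    then have "term_less (a,i) (a,j)" using LT(2) by auto
    then have "j < i" by (auto simp: term_less_def lex_irrefl)
    then show "term_less t (s,j)" using bi \<open>b = s\<close> by (simp add: term_less_def)
  qed
  have "lead_term w' = (s,j)" using lead_term_unique[OF sj others] .
  then show ?thesis using 1(1,2) w'N nz by blast
qed



lemma hcomp_keys: "ks (hcomp d v j) \<subseteq> ks (v j)"
  by (auto simp: hcomp_def in_keys_iff)

lemma vec_decomp:
  fixes Q :: "'k::comm_ring_1 mvec set"
  assumes Q: "is_submodule n k Q" and v: "in_Fk n k v"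
    and each: "\<And>a j. (a, j) \<in> vterms v \<Longrightarrow> (\<lambda>i. if i = j then sg a (lk (v j) a) else 0) \<in> Q"
  shows "v \<in> Q"
proof -
  define X where "X t i = (if i = snd t then sg (fst t) (lk (v (snd t)) (fst t)) else 0)" for t i
  have Q0: "(\<lambda>j. 0) \<in> Q" and Qadd: "\<forall>v\<in>Q. \<forall>w\<in>Q. (\<lambda>j. v j + w j) \<in> Q"
    using Q by (auto simp: is_submodule_def)
  have "(\<lambda>i. \<Sum>t\<in>vterms v. X t i) \<in> Q"
  proof (rule sum_closed_vec[OF Q0 Qadd vterms_finite[OF v]])
    fix t assume t: "t \<in> vterms v"
    obtain a b where ab: "t = (a,b)" by (cases t)
    have "(a,b) \<in> vterms v" using t ab by simp
    then have "(\<lambda>i. if i = b then sg a (lk (v b) a) else 0) \<in> Q" by (rule each)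
    then show "(\<lambda>i. X t i) \<in> Q" unfolding ab X_def fst_conv snd_conv .
  qed
  moreover have "(\<lambda>i. \<Sum>t\<in>vterms v. X t i) = v"
  proof
    fix i
    show "(\<Sum>t\<in>vterms v. X t i) = v i"
    proof (rule poly_mapping_eqI)
      fix m
      have "lk (\<Sum>t\<in>vterms v. X t i) m = (\<Sum>t\<in>vterms v. if t = (m,i) then lk (v i) m else 0)"
        unfolding lookup_sum
      proof (rule sum.cong[OF refl])
        fix t show "lk (X t i) m = (if t = (m,i) then lk (v i) m else 0)"
          by (cases t) (auto simp: X_def lookup_single)
      qed
      also have "\<dots> = (if (m,i) \<in> vterms v then lk (v i) m else 0)"
        by (rule sum.delta[OF vterms_finite[OF v]])
      also have "\<dots> = lk (v i) m" by (auto simp: vterms_def in_keys_iff)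
      finally show "lk (\<Sum>t\<in>vterms v. X t i) m = lk (v i) m" .
    qed
  qed
  ultimately show ?thesis by simp
qed

lemma poly_decomp:
  fixes I :: "'k::comm_ring_1 mpoly set"
  assumes I: "is_ideal n I"
    and each: "\<And>a. a \<in> ks p \<Longrightarrow> sg a (lk p a) \<in> I"
  shows "p \<in> I"
proof -
  have "(\<Sum>a\<in>A. sg a (lk p a)) \<in> I" if "finite A" "A \<subseteq> ks p" for A
    using that
  proof (induction A rule: finite_induct)
    case empty then show ?case using I by (simp add: is_ideal_def)
  next
    case (insert x F) then show ?case using I each by (simp add: is_ideal_def)
  qed
  then show ?thesis by (subst poly_sum) simp
qed



lemma hcomp_Fk: assumes "in_Fk n k v" shows "in_Fk n k (hcomp d v)"
  unfolding in_Fk_def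
proof (intro allI conjI impI)
  fix j assume "j < k"
  then have "in_S n (v j)" using assms by (simp add: in_Fk_def)
  then show "in_S n (hcomp d v j)" using hcomp_keys[of d v j] unfolding in_S_def by blast
next
  fix j assume "k \<le> j"
  then have "v j = 0" using assms by (simp add: in_Fk_def)
  then show "hcomp d v j = 0" by (simp add: hcomp_def)
qed

lemma submod_mult: "is_submodule n k Q \<Longrightarrow> in_S n p \<Longrightarrow> v \<in> Q \<Longrightarrow> (\<lambda>j. p * v j) \<in> Q"
  unfolding is_submodule_def by blast

lemma ideal_mult: "is_ideal n I \<Longrightarrow> in_S n r \<Longrightarrow> p \<in> I \<Longrightarrow> r * p \<in> I"
  unfolding is_ideal_def by blast

theorem proposition4p10:
  fixes n k :: nat and N :: "'k::field mvec set"
  assumes "is_submodule n k N"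
    and "is_graded N"
    and "gen_in_sqfree_degrees n k N"
  shows "is_submodule n k (initial_module n k N) \<and> is_graded (initial_module n k N) \<and>
         (\<exists>I :: nat \<Rightarrow> 'k mpoly set.
            (\<forall>j<k. sqfree_monomial_ideal n (I j)) \<and>
            initial_module n k N = {v. in_Fk n k v \<and> (\<forall>j<k. v j \<in> I j)})"
proof -
  note sub = assms(1) and gr = assms(2)
  have NP: "N \<subseteq> Pset n k N" using N_sub_Pset[OF sub assms(3)] .
  define T where "T = {lead_term v | v. v \<in> N \<and> v \<noteq> (\<lambda>j. 0)}"
  define Msq where "Msq j = {s. sqfree_deg s \<and> (s,j) \<in> T}" for j
  define U where "U j = {a. ks a \<subseteq> {..<n} \<and> (\<exists>s e. a = s + e \<and> s \<in> Msq j)}" for j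
  define M where "M = ({v. in_Fk n k v \<and> (\<forall>j<k. ks (v j) \<subseteq> U j)} :: 'k mvec set)"
  define I where "I j = gen_ideal n ((\<lambda>m. sg m (1::'k)) ` Msq j)" for j
  define gens where "gens = ({term_vec (lead_term v) | v. v \<in> N \<and> v \<noteq> (\<lambda>j. 0)} :: 'k mvec set)"
  have gensT: "gens = (term_vec ` T :: 'k mvec set)"
  proof (intro equalityI subsetI)
    fix g :: "'k mvec" assume "g \<in> gens"
    then obtain v where v: "g = term_vec (lead_term v)" "v \<in> N" "v \<noteq> (\<lambda>j. 0)" unfolding gens_def by auto
    then have "lead_term v \<in> T" unfolding T_def by auto
    then show "g \<in> term_vec ` T" using v(1) by (rule rev_image_eqI)
  next
    fix g :: "'k mvec" assume "g \<in> term_vec ` T"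
    then obtain t where t: "g = term_vec t" "t \<in> T" by auto
    then obtain v where "t = lead_term v" "v \<in> N" "v \<noteq> (\<lambda>j. 0)" unfolding T_def by auto
    then show "g \<in> gens" unfolding gens_def using t(1) by auto
  qed
  have Tprop: "ks a \<subseteq> {..<n} \<and> j < k \<and> (\<exists>s e. a = s + e \<and> s \<in> Msq j)" if aj: "(a,j) \<in> T" for a j
  proof -
    obtain v where v: "v \<in> N" "v \<noteq> (\<lambda>j. 0)" "lead_term v = (a,j)" using aj unfolding T_def by auto
    have Fkv: "in_Fk n k v" using sub v by (simp add: is_submodule_def)
    have "(a,j) \<in> vterms v" using lead_term_prop[OF Fkv v(2)] v(3) by simp
    then have 1: "ks a \<subseteq> {..<n} \<and> j < k" using Fk_keys[OF Fkv] by (auto simp: vterms_def)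
    obtain s e w where se: "a = s + e" "sqfree_deg s" "w \<in> N" "w \<noteq> (\<lambda>j. 0)" "lead_term w = (s, j)"
      using core[OF sub gr NP v] by blast
    have "(s, j) \<in> T" unfolding T_def using se(3-5) by (intro CollectI exI[of _ w]) simp
    then have "s \<in> Msq j" unfolding Msq_def using se(2) by simp
    then show ?thesis using 1 se(1) by blast
  qed
  have Msq_keys: "ks m \<subseteq> {..<n}" if mj: "m \<in> Msq j" for m j
  proof -
    have "(m, j) \<in> T" using mj by (simp add: Msq_def)
    then show ?thesis using Tprop by blast
  qed
  have Uclosed: "a1 + b1 \<in> U j" if b1U: "b1 \<in> U j" and ka1: "ks a1 \<subseteq> {..<n}" for a1 b1 j
  proof -
    obtain s e where "b1 = s + e" "s \<in> Msq j" "ks b1 \<subseteq> {..<n}" using b1U unfolding U_def by blast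
    then have "a1 + b1 = s + (e + a1)" "ks (a1 + b1) \<subseteq> {..<n}" using ka1
      by (simp_all add: ac_simps keys_nat_add)
    then show ?thesis using \<open>s \<in> Msq j\<close> unfolding U_def by blast
  qed
  have keys_mult_U: "ks (p * q) \<subseteq> U j" if pS: "in_S n p" and qU: "ks q \<subseteq> U j" for p q :: "'k mpoly" and j
  proof
    fix a assume "a \<in> ks (p * q)"
    then obtain a1 b1 where "a = a1 + b1" "a1 \<in> ks p" "b1 \<in> ks q" using keys_mult[of p q] by blast
    then show "a \<in> U j" using pS qU Uclosed by (auto simp: in_S_def)
  qed
  have Msub: "is_submodule n k M"
    unfolding is_submodule_def[of n k M]
  proof (intro conjI ballI allI impI)
    fix v assume "v \<in> M" then show "in_Fk n k v" by (simp add: M_def)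
  next
    show "(\<lambda>j. 0) \<in> M" by (simp add: M_def in_Fk_def in_S_zero)
  next
    fix v w assume v: "v \<in> M" and w: "w \<in> M"
    have "in_Fk n k v" "in_Fk n k w" using v w by (simp_all add: M_def)
    then have "in_Fk n k (\<lambda>j. v j + w j)" by (rule Fk_add)
    moreover have "ks (v j + w j) \<subseteq> U j" if jk: "j < k" for j
    proof -
      have "ks (v j) \<subseteq> U j" "ks (w j) \<subseteq> U j" using v w jk by (simp_all add: M_def)
      then show ?thesis using keys_add[of "v j" "w j"] by blast
    qed
    ultimately show "(\<lambda>j. v j + w j) \<in> M" by (simp add: M_def)
  next
    fix p :: "'k mpoly" and v assume v: "v \<in> M" and p: "in_S n p"
    have "in_Fk n k v" using v by (simp add: M_def)
    with p have "in_Fk n k (\<lambda>j. p * v j)" by (rule Fk_mult)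
    moreover have "ks (p * v j) \<subseteq> U j" if jk: "j < k" for j
    proof -
      have "ks (v j) \<subseteq> U j" using v jk by (simp add: M_def)
      then show ?thesis by (rule keys_mult_U[OF p])
    qed
    ultimately show "(\<lambda>j. p * v j) \<in> M" by (simp add: M_def)
  qed
  have gensM: "gens \<subseteq> M"
  proof
    fix g :: "'k mvec" assume "g \<in> gens"
    then obtain a j where aj: "(a,j) \<in> T" "g = term_vec (a,j)" using gensT by auto
    have P: "ks a \<subseteq> {..<n}" "j < k" "a \<in> U j" using Tprop[OF aj(1)] unfolding U_def by auto
    have tv: "g = (\<lambda>i. if i = j then sg a (1::'k) else 0)" unfolding aj(2) term_vec_def fst_conv snd_conv by simp
    have "in_Fk n k g" using P unfolding tv in_Fk_def by (auto simp: in_S_single in_S_zero)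
    moreover have "\<forall>i<k. ks (g i) \<subseteq> U i" using P unfolding tv by auto
    ultimately show "g \<in> M" by (simp add: M_def)
  qed
  have gensFk: "gens \<subseteq> {v. in_Fk n k v}" using gensM M_def by auto
  have Qsub: "is_submodule n k (initial_module n k N)"
    unfolding initial_module_def gens_def[symmetric] using gen_submodule_is[OF gensFk] .
  have eqM: "initial_module n k N = M"
  proof
    show "initial_module n k N \<subseteq> M" unfolding initial_module_def gens_def[symmetric]
      using gen_submodule_least[OF Msub gensM] .
  next
    show "M \<subseteq> initial_module n k N"
    proof
      fix v assume vM: "v \<in> M"
      then have Fkv: "in_Fk n k v" by (simp add: M_def)
      show "v \<in> initial_module n k N"
      proof (rule vec_decomp[OF Qsub Fkv])
        fix a j assume aj: "(a,j) \<in> vterms v"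
        then have ain: "a \<in> ks (v j)" by (simp add: vterms_def)
        then have jk: "j < k" using Fk_keys[OF Fkv] by blast
        have "ks (v j) \<subseteq> U j" using vM jk by (simp add: M_def)
        then have "a \<in> U j" using ain by blast
        then obtain s e where se: "a = s + e" "s \<in> Msq j" "ks a \<subseteq> {..<n}" unfolding U_def by blast
        have "term_vec (s,j) \<in> gens" using se(2) gensT by (auto simp: Msq_def)
        then have tv: "term_vec (s,j) \<in> initial_module n k N"
          unfolding initial_module_def gens_def[symmetric] using gen_submodule_sub by blast
        have ke: "ks e \<subseteq> {..<n}" using se by (auto simp: keys_nat_add)
        have "(\<lambda>i. sg e (lk (v j) a) * term_vec (s,j) i) \<in> initial_module n k N"
          using submod_mult[OF Qsub in_S_single[OF ke] tv] .
        moreover have "(\<lambda>i. sg e (lk (v j) a) * term_vec (s,j) i) = (\<lambda>i. if i = j then sg a (lk (v j) a) else 0)"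
          by (auto simp: term_vec_def mult_single se(1) add.commute)
        ultimately show "(\<lambda>i. if i = j then sg a (lk (v j) a) else 0) \<in> initial_module n k N" by simp
      qed
    qed
  qed
  have Ieq: "I j = {p :: 'k mpoly. in_S n p \<and> ks p \<subseteq> U j}" for j
  proof
    have gsub: "(\<lambda>m. sg m (1::'k)) ` Msq j \<subseteq> {p :: 'k mpoly. in_S n p \<and> ks p \<subseteq> U j}"
    proof
      fix p assume "p \<in> (\<lambda>m. sg m (1::'k)) ` Msq j"
      then obtain m where m: "m \<in> Msq j" "p = sg m 1" by blast
      have "m \<in> U j" using m Msq_keys unfolding U_def by (metis (mono_tags, lifting) add_0_right mem_Collect_eq)
      moreover have "in_S n p" unfolding m(2) by (rule in_S_single[OF Msq_keys[OF m(1)]])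
      ultimately show "p \<in> {p :: 'k mpoly. in_S n p \<and> ks p \<subseteq> U j}" using m(2) by simp
    qed
    have Jid: "is_ideal n {p :: 'k mpoly. in_S n p \<and> ks p \<subseteq> U j}"
      unfolding is_ideal_def[of n "{p :: 'k mpoly. in_S n p \<and> ks p \<subseteq> U j}"]
    proof (intro conjI ballI allI impI)
      fix p :: "'k mpoly" assume "p \<in> {p :: 'k mpoly. in_S n p \<and> ks p \<subseteq> U j}" then show "in_S n p" by simp
    next
      show "0 \<in> {p :: 'k mpoly. in_S n p \<and> ks p \<subseteq> U j}" by (simp add: in_S_zero)
    next
      fix p q :: "'k mpoly" assume p: "p \<in> {p :: 'k mpoly. in_S n p \<and> ks p \<subseteq> U j}" and q: "q \<in> {p :: 'k mpoly. in_S n p \<and> ks p \<subseteq> U j}"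
      have "in_S n (p + q)" using p q in_S_add[of n p q] by simp
      moreover have "ks (p + q) \<subseteq> U j" using p q keys_add[of p q] by auto
      ultimately show "p + q \<in> {p :: 'k mpoly. in_S n p \<and> ks p \<subseteq> U j}" by simp
    next
      fix r p :: "'k mpoly" assume p: "p \<in> {p :: 'k mpoly. in_S n p \<and> ks p \<subseteq> U j}" and r: "in_S n r"
      have "in_S n (r * p)" using p r in_S_mult[of n r p] by simp
      moreover have "ks (r * p) \<subseteq> U j" using p keys_mult_U[OF r] by simp
      ultimately show "r * p \<in> {p :: 'k mpoly. in_S n p \<and> ks p \<subseteq> U j}" by simp
    qed
    show "I j \<subseteq> {p :: 'k mpoly. in_S n p \<and> ks p \<subseteq> U j}" unfolding I_def using gen_ideal_least[OF Jid gsub] .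
    have Iid: "is_ideal n (I j)" unfolding I_def by (rule gen_ideal_is) (use gsub in auto)
    show "{p :: 'k mpoly. in_S n p \<and> ks p \<subseteq> U j} \<subseteq> I j"
    proof
      fix p assume p: "p \<in> {p :: 'k mpoly. in_S n p \<and> ks p \<subseteq> U j}"
      show "p \<in> I j"
      proof (rule poly_decomp[OF Iid])
        fix a assume "a \<in> ks p"
        then have "a \<in> U j" using p by auto
        then obtain s e where se: "a = s + e" "s \<in> Msq j" "ks a \<subseteq> {..<n}" unfolding U_def by blast
        have "sg s (1::'k) \<in> (\<lambda>m. sg m (1::'k)) ` Msq j" using se(2) by (rule imageI)
        then have s1: "sg s (1::'k) \<in> I j" using gen_ideal_sub[of "(\<lambda>m. sg m (1::'k)) ` Msq j" n]
          unfolding I_def by (rule subsetD[rotated])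
        have ke: "ks e \<subseteq> {..<n}" using se(1,3) by (simp add: keys_nat_add)
        have "sg e (lk p a) * sg s 1 \<in> I j" by (rule ideal_mult[OF Iid in_S_single[OF ke] s1])
        then show "sg a (lk p a) \<in> I j" by (simp add: mult_single se(1) add.commute)
      qed
    qed
  qed
  have grM: "is_graded M"
    unfolding is_graded_def
  proof (intro ballI allI)
    fix v d assume vM: "v \<in> M"
    then have Fkv: "in_Fk n k v" and KU: "\<forall>j<k. ks (v j) \<subseteq> U j" by (simp_all add: M_def)
    have "in_Fk n k (hcomp d v)" by (rule hcomp_Fk[OF Fkv])
    moreover have "\<forall>j<k. ks (hcomp d v j) \<subseteq> U j"
    proof (intro allI impI)
      fix j assume "j < k"
      then have "ks (v j) \<subseteq> U j" using KU by blast
      then show "ks (hcomp d v j) \<subseteq> U j" using hcomp_keys[of d v j] by blast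
    qed
    ultimately show "hcomp d v \<in> M" by (simp add: M_def)
  qed
  have sqI: "\<forall>j<k. sqfree_monomial_ideal n (I j)"
  proof (intro allI impI)
    fix j assume "j < k"
    show "sqfree_monomial_ideal n (I j)" unfolding sqfree_monomial_ideal_def
    proof (intro exI[of _ "Msq j"] conjI ballI)
      fix m assume m: "m \<in> Msq j"
      show "ks m \<subseteq> {..<n}" by (rule Msq_keys[OF m])
      show "sqfree_deg m" using m by (simp add: Msq_def)
    next
      show "I j = gen_ideal n ((\<lambda>m. sg m 1) ` Msq j)" by (simp add: I_def)
    qed
  qed
  have final: "initial_module n k N = {v. in_Fk n k v \<and> (\<forall>j<k. v j \<in> I j)}"
  proof (intro equalityI subsetI)
    fix v assume "v \<in> initial_module n k N"
    then have vM: "v \<in> M" using eqM by simp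
    then have Fkv: "in_Fk n k v" and KU: "\<forall>j<k. ks (v j) \<subseteq> U j" by (simp_all add: M_def)
    have "\<forall>j<k. v j \<in> I j"
    proof (intro allI impI)
      fix j assume jk: "j < k"
      then have "in_S n (v j)" using Fkv by (simp add: in_Fk_def)
      moreover have "ks (v j) \<subseteq> U j" using KU jk by blast
      ultimately show "v j \<in> I j" unfolding Ieq by simp
    qed
    then show "v \<in> {v. in_Fk n k v \<and> (\<forall>j<k. v j \<in> I j)}" using Fkv by simp
  next
    fix v assume "v \<in> {v. in_Fk n k v \<and> (\<forall>j<k. v j \<in> I j)}"
    then have Fkv: "in_Fk n k v" and VI: "\<forall>j<k. v j \<in> I j" by simp_all
    have "\<forall>j<k. ks (v j) \<subseteq> U j"
    proof (intro allI impI)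
      fix j assume jk: "j < k"
      then have "v j \<in> I j" using VI by blast
      then show "ks (v j) \<subseteq> U j" unfolding Ieq by simp
    qed
    then have "v \<in> M" using Fkv by (simp add: M_def)
    then show "v \<in> initial_module n k N" using eqM by simp
  qed
  have grI: "is_graded (initial_module n k N)" using grM eqM by simp
  show ?thesis using Qsub grI sqI final by blast
qed


end
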